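(* Let $G\subset\mathrm{Diff}(\mathbb{C},0)$ be a finitely generated $L$-stable subgroup. Then $G$ is finite cyclic or of circle type. In particular, any finitely generated resonant subgroup of an $L$-stable group is finite. Moreover, $G$ is finite if it admits a non-trivial pseudo-orbit which is closed off the origin (or closed), and $G$ is finite provided that some non-trivial pseudo-orbit is not recurrent.
   Context: $\mathrm{Diff}(\mathbb{C},0)$ is the group of germs at $0\in\mathbb{C}$ of holomorphic diffeomorphisms fixing $0$; a germ writes $f(z)=e^{2\pi i\lambda}z+\dots$. The germ is resonant if $\lambda\in\mathbb{Q}$, and (real) non-resonant if $\lambda\in\mathbb{R}\setminus\mathbb{Q}$. A group is resonant if all its elements are resonant. A subgroup $G$ is of circle type if it is abelian and contains a real non-resonant analytically linearizable element. For a finitely generated group of germs, fix representatives of the generators on a neighborhood of $0$; the pseudo-orbit of a point $z$ is the set of points obtained from $z$ by applying finite compositions of generators and their inverses whenever defined. $G$ is $L$-stable if for every neighborhood $U$ of $0$ there is a neighborhood $0\in V\subset U$ such that the pseudo-orbit of every point $p\in V$ remains in $U$. *)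

theory Defs
  imports "HOL-Analysis.Analysis"
begin

text \<open>Germs at 0 are represented by functions complex \<Rightarrow> complex, two functions
  defining the same germ iff they agree on a neighbourhood of 0.\<close>

definition germ_eq :: "(complex \<Rightarrow> complex) \<Rightarrow> (complex \<Rightarrow> complex) \<Rightarrow> bool" where
  "germ_eq f g \<longleftrightarrow> (\<forall>\<^sub>F z in nhds 0. f z = g z)"

definition diff0 :: "(complex \<Rightarrow> complex) \<Rightarrow> bool" where
  "diff0 f \<longleftrightarrow> (\<exists>U. open U \<and> 0 \<in> U \<and> f holomorphic_on U \<and> inj_on f U \<and> f 0 = 0)"

definition germ_subgroup :: "(complex \<Rightarrow> complex) set \<Rightarrow> bool" where
  "germ_subgroup H \<longleftrightarrow>
     (\<forall>g\<in>H. diff0 g) \<and>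
     (\<forall>g\<in>H. \<forall>g'. germ_eq g' g \<longrightarrow> g' \<in> H) \<and>
     id \<in> H \<and>
     (\<forall>g\<in>H. \<forall>h\<in>H. g \<circ> h \<in> H) \<and>
     (\<forall>g\<in>H. \<exists>k\<in>H. germ_eq (g \<circ> k) id \<and> germ_eq (k \<circ> g) id)"

definition gen_by :: "(complex \<Rightarrow> complex) set \<Rightarrow> (complex \<Rightarrow> complex) set" where
  "gen_by F = \<Inter>{H. germ_subgroup H \<and> F \<subseteq> H}"

definition germ_finite :: "(complex \<Rightarrow> complex) set \<Rightarrow> bool" where
  "germ_finite H \<longleftrightarrow> finite ((\<lambda>g. {h. germ_eq h g}) ` H)"

definition finite_cyclic :: "(complex \<Rightarrow> complex) set \<Rightarrow> bool" where
  "finite_cyclic H \<longleftrightarrow> germ_finite H \<and> (\<exists>g\<in>H. \<forall>h\<in>H. \<exists>n::nat. germ_eq h (g ^^ n))"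

definition resonant :: "(complex \<Rightarrow> complex) \<Rightarrow> bool" where
  "resonant f \<longleftrightarrow> (\<exists>t\<in>\<rat>. deriv f 0 = exp (2 * pi * \<i> * of_real t))"

definition real_nonresonant :: "(complex \<Rightarrow> complex) \<Rightarrow> bool" where
  "real_nonresonant f \<longleftrightarrow> (\<exists>t::real. t \<notin> \<rat> \<and> deriv f 0 = exp (2 * pi * \<i> * of_real t))"

definition linearizable :: "(complex \<Rightarrow> complex) \<Rightarrow> bool" where
  "linearizable f \<longleftrightarrow> (\<exists>\<phi>. diff0 \<phi> \<and> (\<forall>\<^sub>F z in nhds 0. \<phi> (f z) = deriv f 0 * \<phi> z))"

definition germ_abelian :: "(complex \<Rightarrow> complex) set \<Rightarrow> bool" where
  "germ_abelian H \<longleftrightarrow> (\<forall>g\<in>H. \<forall>h\<in>H. germ_eq (g \<circ> h) (h \<circ> g))"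

definition circle_type :: "(complex \<Rightarrow> complex) set \<Rightarrow> bool" where
  "circle_type H \<longleftrightarrow> germ_abelian H \<and> (\<exists>g\<in>H. real_nonresonant g \<and> linearizable g)"

text \<open>Representatives of generators: pairs (f, U), f defined on the open
  neighbourhood U of 0.\<close>
definition good_reps :: "((complex \<Rightarrow> complex) \<times> complex set) list \<Rightarrow> bool" where
  "good_reps gens \<longleftrightarrow> (\<forall>(f,U)\<in>set gens. open U \<and> 0 \<in> U \<and> f holomorphic_on U \<and> inj_on f U \<and> f 0 = 0)"

inductive_set pseudo_orbit ::
  "((complex \<Rightarrow> complex) \<times> complex set) list \<Rightarrow> complex \<Rightarrow> complex set"
  for gens :: "((complex \<Rightarrow> complex) \<times> complex set) list" and p :: complex where
  base: "p \<in> pseudo_orbit gens p"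
| fwd: "w \<in> pseudo_orbit gens p \<Longrightarrow> (f, U) \<in> set gens \<Longrightarrow> w \<in> U \<Longrightarrow> f w \<in> pseudo_orbit gens p"
| bwd: "w \<in> pseudo_orbit gens p \<Longrightarrow> (f, U) \<in> set gens \<Longrightarrow> w \<in> f ` U \<Longrightarrow>
          inv_into U f w \<in> pseudo_orbit gens p"

definition L_stable :: "((complex \<Rightarrow> complex) \<times> complex set) list \<Rightarrow> bool" where
  "L_stable gens \<longleftrightarrow> (\<forall>U. open U \<and> 0 \<in> U \<longrightarrow>
      (\<exists>V. open V \<and> 0 \<in> V \<and> V \<subseteq> U \<and> (\<forall>p\<in>V. pseudo_orbit gens p \<subseteq> U)))"

definition closed_off_origin :: "complex set \<Rightarrow> bool" where
  "closed_off_origin S \<longleftrightarrow> closure S - {0} \<subseteq> S"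

definition recurrent_orbit :: "((complex \<Rightarrow> complex) \<times> complex set) list \<Rightarrow> complex \<Rightarrow> bool" where
  "recurrent_orbit gens p \<longleftrightarrow> p islimpt pseudo_orbit gens p"

end

theory Submission
  imports Defs "HOL-Complex_Analysis.Complex_Analysis"
begin


lemma germ_eq_refl: "germ_eq f f"
  by (simp add: germ_eq_def)

lemma germ_eq_sym: "germ_eq f g \<Longrightarrow> germ_eq g f"
  unfolding germ_eq_def by (auto elim: eventually_mono)

lemma germ_eq_trans: "germ_eq f g \<Longrightarrow> germ_eq g h \<Longrightarrow> germ_eq f h"
  unfolding germ_eq_def by (auto elim: eventually_elim2)

lemma germ_eq_open: "germ_eq f g \<longleftrightarrow> (\<exists>S. open S \<and> 0 \<in> S \<and> (\<forall>z\<in>S. f z = g z))"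
  unfolding germ_eq_def eventually_nhds by auto

lemma germ_eqI: "open S \<Longrightarrow> 0 \<in> S \<Longrightarrow> (\<And>z. z \<in> S \<Longrightarrow> f z = g z) \<Longrightarrow> germ_eq f g"
  using germ_eq_open by blast

lemma diff0_cont: "diff0 g \<Longrightarrow> isCont g 0"
  unfolding diff0_def
  by (meson continuous_on_eq_continuous_at holomorphic_on_imp_continuous_on)

lemma diff0_0: "diff0 g \<Longrightarrow> g 0 = 0"
  unfolding diff0_def by auto

lemma cont0_ball:
  fixes c :: "complex \<Rightarrow> complex"
  assumes "isCont c 0" "c 0 = 0" "e > 0"
  obtains d where "d > 0" "\<And>z. z \<in> ball 0 d \<Longrightarrow> c z \<in> ball 0 e"
proof -
  from assms(1) have "\<forall>e>0. \<exists>d>0. c ` ball 0 d \<subseteq> ball (c 0) e"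
    unfolding continuous_at_ball .
  then obtain d where "d > 0" "c ` ball 0 d \<subseteq> ball (c 0) e"
    using assms(3) by blast
  then have "\<And>z. z \<in> ball 0 d \<Longrightarrow> c z \<in> ball 0 e" using assms(2) by (metis image_subset_iff)
  then show ?thesis using \<open>d > 0\<close> by (intro that[of d]) auto
qed

lemma cont0_open:
  fixes c :: "complex \<Rightarrow> complex"
  assumes "isCont c 0" "c 0 = 0" "open S" "0 \<in> S"
  obtains d where "d > 0" "\<And>z. z \<in> ball 0 d \<Longrightarrow> c z \<in> S"
proof -
  obtain e where "e > 0" "ball 0 e \<subseteq> S" using assms(3,4) openE by blast
  obtain d where "d > 0" "\<And>z. z \<in> ball 0 d \<Longrightarrow> c z \<in> ball 0 e"
    using cont0_ball[OF assms(1,2) \<open>e>0\<close>] by blast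
  then show ?thesis using \<open>ball 0 e \<subseteq> S\<close> by (intro that[of d]) auto
qed

lemma germ_eq_comp_right:
  assumes "germ_eq a b" "isCont c 0" "c 0 = 0"
  shows "germ_eq (a \<circ> c) (b \<circ> c)"
proof -
  obtain S where S: "open S" "0 \<in> S" "\<forall>z\<in>S. a z = b z" using assms(1) germ_eq_open by blast
  obtain d where "d > 0" "\<And>z. z \<in> ball 0 d \<Longrightarrow> c z \<in> S"
    using cont0_open[OF assms(2,3) S(1,2)] by blast
  then show ?thesis using S by (intro germ_eqI[of "ball 0 d"]) simp_all
qed

lemma germ_eq_comp_left:
  assumes "germ_eq a b"
  shows "germ_eq (c \<circ> a) (c \<circ> b)"
  using assms unfolding germ_eq_def by (auto elim: eventually_mono)

lemma diff0_comp:
  assumes "diff0 g" "diff0 h"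
  shows "diff0 (g \<circ> h)"
proof -
  obtain U where U: "open U" "0 \<in> U" "g holomorphic_on U" "inj_on g U" "g 0 = 0"
    using assms(1) diff0_def by blast
  obtain V where V: "open V" "0 \<in> V" "h holomorphic_on V" "inj_on h V" "h 0 = 0"
    using assms(2) diff0_def by blast
  define W where "W = V \<inter> h -` U"
  have "continuous_on V h" using V(3) holomorphic_on_imp_continuous_on by blast
  then have "open W" unfolding W_def using V(1) U(1) continuous_open_preimage by blast
  moreover have "0 \<in> W" using U V unfolding W_def by auto
  moreover have "(g \<circ> h) holomorphic_on W"
  proof (rule holomorphic_on_compose_gen[where t=U])
    show "h holomorphic_on W" using V(3) holomorphic_on_subset[of h V W] unfolding W_def by blast
    show "g holomorphic_on U" by (rule U(3))
    show "h ` W \<subseteq> U" unfolding W_def by blast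
  qed
  moreover have "inj_on (g \<circ> h) W"
    using U(4) V(4) unfolding W_def inj_on_def by auto
  ultimately show ?thesis unfolding diff0_def using U V by auto
qed

lemma diff0_germ:
  assumes "diff0 g" "germ_eq g' g"
  shows "diff0 g'"
proof -
  obtain U where U: "open U" "0 \<in> U" "g holomorphic_on U" "inj_on g U" "g 0 = 0"
    using assms(1) diff0_def by blast
  obtain S where S: "open S" "0 \<in> S" "\<forall>z\<in>S. g' z = g z" using assms(2) germ_eq_open by blast
  have "g holomorphic_on (U \<inter> S)" using U(3) holomorphic_on_subset[of g U "U \<inter> S"] by blast
  then have "g' holomorphic_on (U \<inter> S)"
    using holomorphic_transform[of g "U \<inter> S" g'] S(3) by auto
  moreover have "inj_on g' (U \<inter> S)" using U(4) S(3) unfolding inj_on_def by auto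
  ultimately show ?thesis unfolding diff0_def using U S by (intro exI[of _ "U \<inter> S"]) auto
qed

lemma diff0_id: "diff0 id"
  unfolding diff0_def by (intro exI[of _ UNIV]) auto

lemma diff0_inverse:
  assumes "diff0 g"
  obtains k where "diff0 k" "germ_eq (g \<circ> k) id" "germ_eq (k \<circ> g) id"
proof -
  obtain U where U: "open U" "0 \<in> U" "g holomorphic_on U" "inj_on g U" "g 0 = 0"
    using assms(1) diff0_def by blast
  obtain k where k: "k holomorphic_on (g ` U)" "\<And>z. z \<in> U \<Longrightarrow> k (g z) = z"
    using holomorphic_has_inverse[OF U(3,1,4)] by blast
  have og: "open (g ` U)" using open_mapping_thm3[OF U(3,1,4)] .
  have "0 \<in> g ` U" using U by force
  have "k 0 = 0" using k(2)[of 0] U by simp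
  have "inj_on k (g ` U)" using k(2) unfolding inj_on_def by auto
  then have "diff0 k" unfolding diff0_def using og \<open>0 \<in> g ` U\<close> k(1) \<open>k 0 = 0\<close> by blast
  moreover have "germ_eq (g \<circ> k) id"
    by (rule germ_eqI[OF og \<open>0 \<in> g ` U\<close>]) (use k in auto)
  moreover have "germ_eq (k \<circ> g) id"
    by (rule germ_eqI[OF U(1,2)]) (use k in auto)
  ultimately show ?thesis using that by blast
qed

lemma germ_subgroup_diff0: "germ_subgroup H \<Longrightarrow> g \<in> H \<Longrightarrow> diff0 g"
  unfolding germ_subgroup_def by auto

lemma germ_subgroup_sat: "germ_subgroup H \<Longrightarrow> g \<in> H \<Longrightarrow> germ_eq g' g \<Longrightarrow> g' \<in> H"
  unfolding germ_subgroup_def by auto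

lemma germ_subgroup_comp: "germ_subgroup H \<Longrightarrow> g \<in> H \<Longrightarrow> h \<in> H \<Longrightarrow> g \<circ> h \<in> H"
  unfolding germ_subgroup_def by auto

lemma germ_subgroup_id: "germ_subgroup H \<Longrightarrow> id \<in> H"
  unfolding germ_subgroup_def by auto

lemma germ_subgroup_inv: "germ_subgroup H \<Longrightarrow> g \<in> H \<Longrightarrow>
   \<exists>k\<in>H. germ_eq (g \<circ> k) id \<and> germ_eq (k \<circ> g) id"
  unfolding germ_subgroup_def by auto

lemma inverse_unique:
  assumes "diff0 k1" "diff0 k2" "germ_eq (k1 \<circ> g) id" "germ_eq (g \<circ> k2) id"
  shows "germ_eq k1 k2"
proof -
  have "germ_eq ((k1 \<circ> g) \<circ> k2) (id \<circ> k2)"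
    by (rule germ_eq_comp_right[OF assms(3) diff0_cont[OF assms(2)] diff0_0[OF assms(2)]])
  moreover have "germ_eq (k1 \<circ> (g \<circ> k2)) (k1 \<circ> id)"
    by (rule germ_eq_comp_left[OF assms(4)])
  ultimately have "germ_eq (k1 \<circ> (g \<circ> k2)) k2" "germ_eq (k1 \<circ> (g \<circ> k2)) k1"
    by (simp_all add: o_assoc)
  then show ?thesis using germ_eq_sym germ_eq_trans by blast
qed

lemma gen_by_props:
  assumes "germ_subgroup H0" "F \<subseteq> H0"
  shows "germ_subgroup (gen_by F)" "F \<subseteq> gen_by F"
    "\<And>H. germ_subgroup H \<Longrightarrow> F \<subseteq> H \<Longrightarrow> gen_by F \<subseteq> H"
proof -
  show "F \<subseteq> gen_by F" unfolding gen_by_def by auto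
  show "\<And>H. germ_subgroup H \<Longrightarrow> F \<subseteq> H \<Longrightarrow> gen_by F \<subseteq> H" unfolding gen_by_def by auto
  have sub: "gen_by F \<subseteq> H0" using assms unfolding gen_by_def by auto
  show "germ_subgroup (gen_by F)"
    unfolding germ_subgroup_def
  proof (intro conjI ballI allI impI)
    fix g assume "g \<in> gen_by F" then show "diff0 g"
      using sub assms(1) germ_subgroup_diff0 by blast
  next
    fix g g' assume "g \<in> gen_by F" "germ_eq g' g" then show "g' \<in> gen_by F"
      unfolding gen_by_def using germ_subgroup_sat by blast
  next
    show "id \<in> gen_by F" unfolding gen_by_def using germ_subgroup_id by blast
  next
    fix g h assume "g \<in> gen_by F" "h \<in> gen_by F" then show "g \<circ> h \<in> gen_by F"
      unfolding gen_by_def using germ_subgroup_comp by blast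
  next
    fix g assume g: "g \<in> gen_by F"
    then have "g \<in> H0" using sub by auto
    then obtain k where k: "k \<in> H0" "germ_eq (g \<circ> k) id" "germ_eq (k \<circ> g) id"
      using germ_subgroup_inv[OF assms(1)] by blast
    have "k \<in> H" if H: "germ_subgroup H" "F \<subseteq> H" for H
    proof -
      have "g \<in> H" using g H unfolding gen_by_def by auto
      then obtain k' where k': "k' \<in> H" "germ_eq (g \<circ> k') id" "germ_eq (k' \<circ> g) id"
        using germ_subgroup_inv[OF H(1)] by blast
      have "germ_eq k k'"
        using inverse_unique[of k k' g] k k' germ_subgroup_diff0 H(1) assms(1) by blast
      then show ?thesis using germ_subgroup_sat[OF H(1) k'(1)] by blast
    qed
    then have "k \<in> gen_by F" unfolding gen_by_def by auto
    then show "\<exists>k\<in>gen_by F. germ_eq (g \<circ> k) id \<and> germ_eq (k \<circ> g) id" using k by blast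
  qed
qed



lemma orb_trans:
  assumes "q \<in> pseudo_orbit gens p" "x \<in> pseudo_orbit gens q"
  shows "x \<in> pseudo_orbit gens p"
  using assms(2)
proof (induction rule: pseudo_orbit.induct)
  case base then show ?case using assms(1) .
next
  case (fwd w f U) then show ?case using pseudo_orbit.fwd by blast
next
  case (bwd w f U) then show ?case using pseudo_orbit.bwd by blast
qed

lemma orb_fwd1:
  assumes "(f, U) \<in> set gens" "w \<in> U"
  shows "f w \<in> pseudo_orbit gens w"
  using pseudo_orbit.fwd[OF pseudo_orbit.base assms] .

lemma orb_sym:
  assumes reps: "good_reps gens" and "q \<in> pseudo_orbit gens p"
  shows "p \<in> pseudo_orbit gens q"
  using assms(2)
proof (induction rule: pseudo_orbit.induct)
  case base then show ?case by (rule pseudo_orbit.base)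
next
  case (fwd w f U)
  have inj: "inj_on f U" using reps fwd(2) unfolding good_reps_def by auto
  have "f w \<in> f ` U" using fwd(3) by blast
  then have "inv_into U f (f w) \<in> pseudo_orbit gens (f w)"
    using pseudo_orbit.bwd[OF pseudo_orbit.base fwd(2)] by blast
  then have "w \<in> pseudo_orbit gens (f w)" using inv_into_f_f[OF inj fwd(3)] by simp
  then show ?case using orb_trans fwd(4) by blast
next
  case (bwd w f U)
  have "inv_into U f w \<in> U" using bwd(3) by (rule inv_into_into)
  then have "f (inv_into U f w) \<in> pseudo_orbit gens (inv_into U f w)"
    using orb_fwd1[OF bwd(2)] by blast
  then have "w \<in> pseudo_orbit gens (inv_into U f w)" using f_inv_into_f[OF bwd(3)] by simp
  then show ?case using orb_trans bwd(4) by blast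
qed

definition tracked :: "((complex \<Rightarrow> complex) \<times> complex set) list \<Rightarrow> (complex \<Rightarrow> complex) \<Rightarrow> bool" where
  "tracked gens g \<longleftrightarrow> diff0 g \<and> (\<exists>e>0. \<forall>z\<in>ball 0 e. g z \<in> pseudo_orbit gens z)"

lemma tracked_subgroup:
  assumes reps: "good_reps gens"
  shows "germ_subgroup {g. tracked gens g}" "fst ` set gens \<subseteq> {g. tracked gens g}"
proof -
  show "fst ` set gens \<subseteq> {g. tracked gens g}"
  proof
    fix f assume "f \<in> fst ` set gens"
    then obtain U where fU: "(f, U) \<in> set gens" by force
    then have U: "open U" "0 \<in> U" "f holomorphic_on U" "inj_on f U" "f 0 = 0"
      using reps unfolding good_reps_def by auto
    then have "diff0 f" unfolding diff0_def by blast
    obtain e where "e > 0" "ball 0 e \<subseteq> U" using U(1,2) openE by blast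
    then have "\<forall>z\<in>ball 0 e. f z \<in> pseudo_orbit gens z" using orb_fwd1[OF fU] by blast
    then show "f \<in> {g. tracked gens g}" unfolding tracked_def using \<open>diff0 f\<close> \<open>e > 0\<close> by blast
  qed
  show "germ_subgroup {g. tracked gens g}"
    unfolding germ_subgroup_def
  proof (intro conjI ballI allI impI)
    fix g assume "g \<in> {g. tracked gens g}" then show "diff0 g" unfolding tracked_def by simp
  next
    fix g g' assume g: "g \<in> {g. tracked gens g}" and gg: "germ_eq g' g"
    then have d: "diff0 g'" using diff0_germ unfolding tracked_def by blast
    obtain e where e: "e > 0" "\<forall>z\<in>ball 0 e. g z \<in> pseudo_orbit gens z" using g unfolding tracked_def by blast
    obtain S where S: "open S" "0 \<in> S" "\<forall>z\<in>S. g' z = g z" using gg germ_eq_open by blast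
    obtain e' where e': "e' > 0" "ball 0 e' \<subseteq> S \<inter> ball 0 e"
      using S(1,2) e(1) openE[of "S \<inter> ball 0 e" 0] by (metis Int_iff centre_in_ball open_Int open_ball)
    have "\<forall>z\<in>ball 0 e'. g' z \<in> pseudo_orbit gens z"
    proof
      fix z :: complex assume "z \<in> ball 0 e'"
      then have "z \<in> S" "z \<in> ball 0 e" using e'(2) by auto
      then show "g' z \<in> pseudo_orbit gens z" using S(3) e(2) by simp
    qed
    then show "g' \<in> {g. tracked gens g}" unfolding tracked_def using d e'(1) by blast
  next
    show "id \<in> {g. tracked gens g}" unfolding tracked_def using diff0_id pseudo_orbit.base
      by (auto intro!: exI[of _ 1])
  next
    fix g h assume g: "g \<in> {g. tracked gens g}" and h: "h \<in> {g. tracked gens g}"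
    have d: "diff0 (g \<circ> h)" using g h diff0_comp unfolding tracked_def by blast
    obtain e where e: "e > 0" "\<forall>z\<in>ball 0 e. g z \<in> pseudo_orbit gens z" using g unfolding tracked_def by blast
    obtain eh where eh: "eh > 0" "\<forall>z\<in>ball 0 eh. h z \<in> pseudo_orbit gens z" using h unfolding tracked_def by blast
    have hc: "isCont h 0" "h 0 = 0" using h diff0_cont diff0_0 unfolding tracked_def by auto
    obtain d1 where d1: "d1 > 0" "\<And>z. z \<in> ball 0 d1 \<Longrightarrow> h z \<in> ball 0 e"
      using cont0_ball[OF hc e(1)] by blast
    define d2 where "d2 = min d1 eh"
    have "\<forall>z\<in>ball 0 d2. (g \<circ> h) z \<in> pseudo_orbit gens z"
    proof
      fix z :: complex assume z: "z \<in> ball 0 d2"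
      then have "h z \<in> pseudo_orbit gens z" using eh unfolding d2_def by auto
      moreover have "g (h z) \<in> pseudo_orbit gens (h z)" using e(2) d1(2) z unfolding d2_def by auto
      ultimately show "(g \<circ> h) z \<in> pseudo_orbit gens z" using orb_trans by auto
    qed
    moreover have "d2 > 0" using d1(1) eh(1) unfolding d2_def by simp
    ultimately show "g \<circ> h \<in> {g. tracked gens g}" unfolding tracked_def using d by blast
  next
    fix g assume g: "g \<in> {g. tracked gens g}"
    then have dg: "diff0 g" unfolding tracked_def by simp
    obtain e where e: "e > 0" "\<forall>z\<in>ball 0 e. g z \<in> pseudo_orbit gens z" using g unfolding tracked_def by blast
    obtain k where k: "diff0 k" "germ_eq (g \<circ> k) id" "germ_eq (k \<circ> g) id"
      using diff0_inverse[OF dg] by blast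
    obtain S where S: "open S" "0 \<in> S" "\<forall>z\<in>S. g (k z) = z" using k(2) germ_eq_open by force
    obtain d1 where d1: "d1 > 0" "\<And>z. z \<in> ball 0 d1 \<Longrightarrow> k z \<in> ball 0 e"
      using cont0_ball[OF diff0_cont[OF k(1)] diff0_0[OF k(1)] e(1)] by blast
    obtain d2 where d2: "d2 > 0" "ball 0 d2 \<subseteq> S \<inter> ball 0 d1"
      using S(1,2) d1(1) openE[of "S \<inter> ball 0 d1" 0] by (metis Int_iff centre_in_ball open_Int open_ball)
    have "\<forall>z\<in>ball 0 d2. k z \<in> pseudo_orbit gens z"
    proof
      fix z :: complex assume z: "z \<in> ball 0 d2"
      then have "g (k z) \<in> pseudo_orbit gens (k z)" using e(2) d1(2) d2(2) by blast
      then have "z \<in> pseudo_orbit gens (k z)" using S(3) z d2(2) by auto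
      then show "k z \<in> pseudo_orbit gens z" using orb_sym[OF reps] by blast
    qed
    then have "k \<in> {g. tracked gens g}" unfolding tracked_def using k(1) d2(1) by blast
    then show "\<exists>k\<in>{g. tracked gens g}. germ_eq (g \<circ> k) id \<and> germ_eq (k \<circ> g) id" using k by blast
  qed
qed



lemma diff0_has_deriv: "diff0 g \<Longrightarrow> (g has_field_derivative deriv g 0) (at 0)"
  unfolding diff0_def using holomorphic_derivI by blast

lemma deriv_comp0:
  assumes "diff0 g" "diff0 h"
  shows "deriv (g \<circ> h) 0 = deriv g 0 * deriv h 0"
proof -
  have "(g has_field_derivative deriv g 0) (at (h 0))"
    using diff0_has_deriv[OF assms(1)] diff0_0[OF assms(2)] by simp
  from DERIV_chain[OF this diff0_has_deriv[OF assms(2)]] show ?thesis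
    by (rule DERIV_imp_deriv)
qed

lemma deriv_germ: "germ_eq a b \<Longrightarrow> deriv a 0 = deriv b 0"
  unfolding germ_eq_def by (rule deriv_cong_ev) auto

lemma deriv_id0: "deriv id 0 = 1"
  by (simp add: id_def)

lemma iter_0: "(g::complex \<Rightarrow> complex) 0 = 0 \<Longrightarrow> (g ^^ n) 0 = 0"
  by (induction n) auto

lemma iter_deriv:
  fixes g :: "complex \<Rightarrow> complex"
  assumes "diff0 g"
  shows "((g ^^ n) has_field_derivative (deriv g 0) ^ n) (at 0)"
proof (induction n)
  case 0 then show ?case by (simp add: id_def)
next
  case (Suc n)
  have "(g has_field_derivative deriv g 0) (at ((g ^^ n) 0))"
    using diff0_has_deriv[OF assms] iter_0[of g, OF diff0_0[OF assms]] by simp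
  from DERIV_chain[OF this Suc] show ?case unfolding funpow.simps(2) power_Suc .
qed

lemma stable_iter:
  fixes g :: "complex \<Rightarrow> complex"
  assumes stable: "L_stable gens" and tr: "tracked gens g" and "r > 0"
  obtains V where "open V" "0 \<in> V" "V \<subseteq> ball 0 r"
    "\<And>n z. z \<in> V \<Longrightarrow> (g ^^ n) z \<in> pseudo_orbit gens z"
    "\<And>n z. z \<in> V \<Longrightarrow> (g ^^ n) z \<in> ball 0 r"
    "\<And>n. (g ^^ n) holomorphic_on V"
proof -
  obtain e where e: "e > 0" "\<forall>z\<in>ball 0 e. g z \<in> pseudo_orbit gens z" "diff0 g"
    using tr unfolding tracked_def by blast
  obtain U where U: "open U" "0 \<in> U" "g holomorphic_on U" "inj_on g U" "g 0 = 0"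
    using e(3) diff0_def by blast
  obtain sU where sU: "sU > 0" "ball 0 sU \<subseteq> U" using U(1,2) openE by blast
  define s where "s = min r (min e sU)"
  have s: "s > 0" using sU e \<open>r > 0\<close> unfolding s_def by simp
  have "open (ball (0::complex) s) \<and> 0 \<in> ball (0::complex) s" using s by simp
  then obtain V where V: "open V" "0 \<in> V" "V \<subseteq> ball 0 s" "\<forall>p\<in>V. pseudo_orbit gens p \<subseteq> ball 0 s"
    using stable unfolding L_stable_def by blast
  have bs: "ball 0 s \<subseteq> ball 0 r" "ball 0 s \<subseteq> ball 0 e" "ball 0 s \<subseteq> U"
    using sU(2) unfolding s_def by auto
  have orb: "(g ^^ n) z \<in> pseudo_orbit gens z" if "z \<in> V" for n z
  proof (induction n)
    case 0 then show ?case by (simp add: pseudo_orbit.base)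
  next
    case (Suc n)
    have "(g ^^ n) z \<in> ball 0 e" using Suc V(4) that bs by blast
    then have "g ((g ^^ n) z) \<in> pseudo_orbit gens ((g ^^ n) z)" using e(2) by blast
    then show ?case using orb_trans[OF Suc] by simp
  qed
  have inb: "(g ^^ n) z \<in> ball 0 s" if "z \<in> V" for n z
    using orb[OF that] V(4) that by blast
  have hol: "(g ^^ n) holomorphic_on V" for n
  proof (induction n)
    case 0 then show ?case by (simp add: id_def)
  next
    case (Suc n)
    have "(g \<circ> (g ^^ n)) holomorphic_on V"
      by (rule holomorphic_on_compose_gen[OF Suc U(3)]) (use inb bs in blast)
    then show ?case unfolding funpow.simps(2) .
  qed
  have "\<And>n z. z \<in> V \<Longrightarrow> (g ^^ n) z \<in> ball 0 r" using inb bs(1) by blast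
  moreover have "V \<subseteq> ball 0 r" using V(3) bs(1) by blast
  ultimately show ?thesis using that[OF V(1,2)] orb hol by blast
qed

lemma tracked_deriv_le1:
  fixes g :: "complex \<Rightarrow> complex"
  assumes stable: "L_stable gens" and tr: "tracked gens g"
  shows "norm (deriv g 0) \<le> 1"
proof (rule ccontr)
  assume "\<not> norm (deriv g 0) \<le> 1"
  then have gt: "norm (deriv g 0) > 1" by simp
  have dg: "diff0 g" using tr unfolding tracked_def by simp
  obtain V where V: "open V" "0 \<in> V" "V \<subseteq> ball 0 1"
    "\<And>n z. z \<in> V \<Longrightarrow> (g ^^ n) z \<in> pseudo_orbit gens z"
    "\<And>n z. z \<in> V \<Longrightarrow> (g ^^ n) z \<in> ball 0 1"
    "\<And>n. (g ^^ n) holomorphic_on V"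
    by (rule stable_iter[OF stable tr zero_less_one]) blast
  obtain e where e: "e > 0" "cball 0 e \<subseteq> V" using V(1,2) open_contains_cball_eq by blast
  have bound: "norm (deriv g 0) ^ n \<le> 1 / e" for n
  proof -
    have "norm ((deriv ^^ 1) (g ^^ n) 0) \<le> fact 1 * 1 / e ^ 1"
    proof (rule Cauchy_inequality)
      have "ball 0 e \<subseteq> V" using e(2) ball_subset_cball by blast
      then show "(g ^^ n) holomorphic_on ball 0 e"
        using V(6)[of n] holomorphic_on_subset by blast
      have "(g ^^ n) holomorphic_on cball 0 e"
        using V(6)[of n] e(2) holomorphic_on_subset by blast
      then show "continuous_on (cball 0 e) (g ^^ n)"
        using holomorphic_on_imp_continuous_on by blast
      show "0 < e" by (rule e(1))
      fix x :: complex assume "norm (0 - x) = e"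
      then have "x \<in> V" using e(2) by (auto simp: norm_minus_commute)
      then show "norm ((g ^^ n) x) \<le> 1" using V(5)[of x n] by auto
    qed
    moreover have "deriv (g ^^ n) 0 = deriv g 0 ^ n"
      using iter_deriv[OF dg] by (rule DERIV_imp_deriv)
    ultimately show ?thesis by (simp add: norm_power)
  qed
  obtain n where "1 / e < norm (deriv g 0) ^ n" using real_arch_pow[OF gt] by blast
  then show False using bound[of n] by simp
qed

lemma G_basic:
  assumes reps: "good_reps gens"
  shows "germ_subgroup (gen_by (fst ` set gens))" "fst ` set gens \<subseteq> gen_by (fst ` set gens)"
    "gen_by (fst ` set gens) \<subseteq> {g. tracked gens g}"
  using gen_by_props[OF tracked_subgroup(1)[OF reps] tracked_subgroup(2)[OF reps]]
    tracked_subgroup[OF reps] by auto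

lemma G_deriv_norm1:
  assumes reps: "good_reps gens" and stable: "L_stable gens" and g: "g \<in> gen_by (fst ` set gens)"
  shows "norm (deriv g 0) = 1"
proof -
  note G = G_basic[OF reps]
  obtain k where k: "k \<in> gen_by (fst ` set gens)" "germ_eq (g \<circ> k) id"
    using germ_subgroup_inv[OF G(1) g] by blast
  have dg: "diff0 g" "diff0 k" using G(1) g k(1) germ_subgroup_diff0 by blast+
  have "deriv g 0 * deriv k 0 = 1"
    using deriv_comp0[OF dg] deriv_germ[OF k(2)] deriv_id0 by simp
  moreover have "norm (deriv g 0) \<le> 1" "norm (deriv k 0) \<le> 1"
    using tracked_deriv_le1[OF stable] G(3) g k(1) by blast+
  ultimately have "norm (deriv g 0) * norm (deriv k 0) = 1" "norm (deriv g 0) \<le> 1" "norm (deriv k 0) \<le> 1"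
    by (metis norm_mult norm_one)+
  moreover have "norm (deriv g 0) * norm (deriv k 0) \<le> norm (deriv g 0) * 1"
    by (rule mult_left_mono) (use calculation in auto)
  ultimately show ?thesis by simp
qed



lemma cplx_suc_ne0: "(1::complex) + of_nat n \<noteq> 0"
  by (metis of_nat_Suc of_nat_eq_0_iff Zero_not_Suc)

lemma cesaro_lin:
  fixes g :: "complex \<Rightarrow> complex" and V :: "complex set" and lam :: complex
  assumes V: "open V" "0 \<in> V"
    and hol: "\<And>n. (g ^^ n) holomorphic_on V"
    and bnd: "\<And>n z. z \<in> V \<Longrightarrow> norm ((g ^^ n) z) \<le> R"
    and g0: "g 0 = 0"
    and der: "\<And>n. ((g ^^ n) has_field_derivative lam ^ n) (at 0)"
    and lam: "norm lam = 1"
  obtains \<phi> where "\<phi> holomorphic_on V" "\<phi> 0 = 0" "deriv \<phi> 0 = 1"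
    "\<forall>z\<in>V. g z \<in> V \<longrightarrow> \<phi> (g z) = lam * \<phi> z"
proof -
  have lam0: "lam \<noteq> 0" using lam by auto
  have nlamj: "norm (lam ^ j) = 1" for j using lam by (simp add: norm_power)
  define \<Phi> where "\<Phi> n z = (\<Sum>j<Suc n. (g ^^ j) z / lam ^ j) / of_nat (Suc n)" for n z
  define H where "H = {h. h holomorphic_on V \<and> (\<forall>z\<in>V. norm (h z) \<le> R)}"
  have R0: "R \<ge> 0" using bnd[OF V(2), of 0] by (meson norm_ge_zero order_trans)
  have PhiH: "\<Phi> n \<in> H" for n
  proof -
    have "(\<lambda>z. \<Sum>j<Suc n. (g ^^ j) z / lam ^ j) holomorphic_on V"
      by (intro holomorphic_on_sum holomorphic_on_divide hol holomorphic_on_const) (use lam0 in auto)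
    moreover have "(of_nat (Suc n) :: complex) \<noteq> 0" by (simp only: of_nat_eq_0_iff)
    ultimately have h1: "\<Phi> n holomorphic_on V" unfolding \<Phi>_def[abs_def]
      by (intro holomorphic_on_divide holomorphic_on_const) auto
    have "norm (\<Phi> n z) \<le> R" if z: "z \<in> V" for z
    proof -
      have "norm (\<Sum>j<Suc n. (g ^^ j) z / lam ^ j) \<le> (\<Sum>j<Suc n. norm ((g ^^ j) z / lam ^ j))"
        by (rule norm_sum)
      also have "\<dots> \<le> (\<Sum>j<Suc n. R)"
        by (intro sum_mono) (simp add: norm_divide nlamj bnd[OF z])
      also have "\<dots> = real (Suc n) * R" by simp
      finally have "norm (\<Sum>j<Suc n. (g ^^ j) z / lam ^ j) \<le> real (Suc n) * R" .
      moreover have "norm (\<Phi> n z) = norm (\<Sum>j<Suc n. (g ^^ j) z / lam ^ j) / real (Suc n)"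
        unfolding \<Phi>_def norm_divide norm_of_nat ..
      moreover have "real (Suc n) > 0" by simp
      ultimately show ?thesis by (simp add: pos_divide_le_eq mult.commute del: of_nat_Suc)
    qed
    with h1 show ?thesis unfolding H_def by blast
  qed
  obtain \<phi> r where phi: "\<phi> holomorphic_on V" "strict_mono (r :: nat \<Rightarrow> nat)"
      "\<And>x. x \<in> V \<Longrightarrow> ((\<lambda>n. \<Phi> (r n) x) \<longlongrightarrow> \<phi> x) sequentially"
      "\<And>K. \<lbrakk>compact K; K \<subseteq> V\<rbrakk> \<Longrightarrow> uniform_limit K (\<Phi> \<circ> r) \<phi> sequentially"
  proof (rule Montel[OF V(1), of H \<Phi>])
    show "\<And>h. h \<in> H \<Longrightarrow> h holomorphic_on V" unfolding H_def by blast
    show "\<exists>B. \<forall>h\<in>H. \<forall>z\<in>K. norm (h z) \<le> B" if "compact K" "K \<subseteq> V" for K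
      using that unfolding H_def by blast
    show "range \<Phi> \<subseteq> H" using PhiH by blast
  qed blast
  have Phi0: "\<Phi> n 0 = 0" for n unfolding \<Phi>_def using iter_0[of g] g0 by simp
  have "((\<lambda>n. \<Phi> (r n) 0) \<longlongrightarrow> 0) sequentially" using Phi0 by simp
  then have phi0: "\<phi> 0 = 0" using phi(3)[OF V(2)] LIMSEQ_unique by blast
  have dPhi: "(\<Phi> n has_field_derivative 1) (at 0)" for n
  proof -
    have "((\<lambda>z. \<Sum>j<Suc n. (g ^^ j) z / lam ^ j) has_field_derivative (\<Sum>j<Suc n. lam ^ j / lam ^ j)) (at 0)"
      by (intro DERIV_sum DERIV_cdivide der)
    then have "((\<lambda>z. (\<Sum>j<Suc n. (g ^^ j) z / lam ^ j) / of_nat (Suc n)) has_field_derivative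
        (\<Sum>j<Suc n. lam ^ j / lam ^ j) / of_nat (Suc n)) (at 0)"
      by (rule DERIV_cdivide)
    moreover have "(\<Sum>j<Suc n. lam ^ j / lam ^ j) / of_nat (Suc n) = 1"
      using lam0 by (simp add: cplx_suc_ne0)
    ultimately show ?thesis unfolding \<Phi>_def[abs_def] by simp
  qed
  obtain e where e: "e > 0" "cball 0 e \<subseteq> V" using V open_contains_cball_eq by blast
  have "deriv \<phi> 0 = 1"
  proof -
    obtain g' where g': "continuous_on (cball 0 e) \<phi>"
      "\<And>w. w \<in> ball 0 e \<Longrightarrow> (\<phi> has_field_derivative (g' w)) (at w) \<and>
          ((\<lambda>n. deriv (\<Phi> (r n)) w) \<longlongrightarrow> g' w) sequentially"
    proof (rule has_complex_derivative_uniform_limit[where f="\<Phi> \<circ> r" and z=0 and r=e and f'="\<lambda>n w. deriv (\<Phi> (r n)) w" and F=sequentially and g=\<phi>])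
      show "\<forall>\<^sub>F n in sequentially. continuous_on (cball 0 e) ((\<Phi> \<circ> r) n) \<and>
          (\<forall>w\<in>ball 0 e. ((\<Phi> \<circ> r) n has_field_derivative deriv (\<Phi> (r n)) w) (at w))"
      proof (intro always_eventually allI conjI ballI)
        fix n
        have hv: "\<Phi> (r n) holomorphic_on V" using PhiH unfolding H_def by blast
        then show "continuous_on (cball 0 e) ((\<Phi> \<circ> r) n)"
          using e(2) holomorphic_on_imp_continuous_on holomorphic_on_subset by (metis comp_apply)
        fix w :: complex assume "w \<in> ball 0 e"
        then have "w \<in> V" using e(2) ball_subset_cball by blast
        then show "((\<Phi> \<circ> r) n has_field_derivative deriv (\<Phi> (r n)) w) (at w)"
          using holomorphic_derivI[OF hv V(1)] by simp
      qed
      show "uniform_limit (cball 0 e) (\<Phi> \<circ> r) \<phi> sequentially" using phi(4) e(2) by simp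
    qed (use e(1) in auto)
    have "(\<phi> has_field_derivative (g' 0)) (at 0)" "((\<lambda>n. deriv (\<Phi> (r n)) 0) \<longlongrightarrow> g' 0) sequentially"
      using g'(2)[of 0] e(1) by auto
    moreover have "deriv (\<Phi> (r n)) 0 = 1" for n using dPhi by (rule DERIV_imp_deriv)
    ultimately have "((\<lambda>n. 1) \<longlongrightarrow> g' 0) sequentially" "(\<phi> has_field_derivative (g' 0)) (at 0)"
      by auto
    moreover have "((\<lambda>n. 1) \<longlongrightarrow> (1::complex)) sequentially" by simp
    ultimately have "g' 0 = 1" "(\<phi> has_field_derivative (g' 0)) (at 0)"
      using LIMSEQ_unique by blast+
    then show ?thesis using DERIV_imp_deriv by auto
  qed
  have feq: "\<phi> (g z) = lam * \<phi> z" if z: "z \<in> V" and gz: "g z \<in> V" for z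
  proof -
    define a where "a j = (g ^^ j) z / lam ^ j" for j
    have diff: "\<Phi> n (g z) - lam * \<Phi> n z = lam * (a (Suc n) - a 0) / of_nat (Suc n)" for n
    proof -
      have "(\<Sum>j<Suc n. (g ^^ j) (g z) / lam ^ j) = lam * (\<Sum>j<Suc n. a (Suc j))"
        unfolding sum_distrib_left a_def
      proof (rule sum.cong[OF refl])
        fix j
        have "(g ^^ j) (g z) = (g ^^ Suc j) z" unfolding funpow_Suc_right by simp
        then show "(g ^^ j) (g z) / lam ^ j = lam * ((g ^^ Suc j) z / lam ^ Suc j)"
          using lam0 by simp
      qed
      moreover have "(\<Sum>j<Suc n. (g ^^ j) z / lam ^ j) = (\<Sum>j<Suc n. a j)" unfolding a_def by simp
      ultimately have e1: "\<Phi> n (g z) = lam * (\<Sum>j<Suc n. a (Suc j)) / of_nat (Suc n)"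
          and e2: "\<Phi> n z = (\<Sum>j<Suc n. a j) / of_nat (Suc n)"
        unfolding \<Phi>_def by (simp_all del: of_nat_Suc sum.lessThan_Suc)
      have "\<Phi> n (g z) - lam * \<Phi> n z = lam * ((\<Sum>j<Suc n. a (Suc j)) - (\<Sum>j<Suc n. a j)) / of_nat (Suc n)"
        unfolding e1 e2 by (simp only: times_divide_eq_right right_diff_distrib diff_divide_distrib)
      also have "(\<Sum>j<Suc n. a (Suc j)) - (\<Sum>j<Suc n. a j) = (\<Sum>j<Suc n. a (Suc j) - a j)"
        by (simp add: sum_subtractf)
      also have "\<dots> = a (Suc n) - a 0" by (rule sum_lessThan_telescope)
      finally show ?thesis .
    qed
    have abound: "norm (a j) \<le> R" for j unfolding a_def using bnd[OF z] by (simp add: norm_divide nlamj)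
    have nb: "norm (\<Phi> n (g z) - lam * \<Phi> n z) \<le> 2 * R * inverse (real (Suc n))" for n
    proof -
      have "norm (a (Suc n) - a 0) \<le> 2 * R"
        using norm_triangle_ineq4[of "a (Suc n)" "a 0"] abound[of "Suc n"] abound[of 0] by linarith
      moreover have "norm (\<Phi> n (g z) - lam * \<Phi> n z) = norm (a (Suc n) - a 0) / real (Suc n)"
        unfolding diff norm_divide norm_mult lam norm_of_nat by simp
      ultimately show ?thesis by (simp add: divide_right_mono field_class.field_divide_inverse del: of_nat_Suc)
    qed
    have lim1: "((\<lambda>n. \<Phi> (r n) (g z) - lam * \<Phi> (r n) z) \<longlongrightarrow> \<phi> (g z) - lam * \<phi> z) sequentially"
      by (intro tendsto_intros phi(3) z gz)
    have "((\<lambda>n. 2 * R * inverse (real (Suc (r n)))) \<longlongrightarrow> 0) sequentially"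
    proof -
      have "((\<lambda>n. inverse (real (Suc n))) \<longlongrightarrow> 0) sequentially" by (rule LIMSEQ_inverse_real_of_nat)
      then have "((\<lambda>n. inverse (real (Suc (r n)))) \<longlongrightarrow> 0) sequentially"
        using LIMSEQ_subseq_LIMSEQ[OF _ phi(2)] by (simp add: o_def)
      then show ?thesis using tendsto_mult_right_zero by blast
    qed
    then have lim2: "((\<lambda>n. \<Phi> (r n) (g z) - lam * \<Phi> (r n) z) \<longlongrightarrow> 0) sequentially"
      by (rule Lim_null_comparison[rotated]) (use nb in auto)
    from LIMSEQ_unique[OF lim1 lim2] show ?thesis by simp
  qed
  show ?thesis using that[OF phi(1) phi0 \<open>deriv \<phi> 0 = 1\<close>] feq by blast
qed



locale LS =
  fixes gens :: "((complex \<Rightarrow> complex) \<times> complex set) list"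
  assumes reps: "good_reps gens" and stable: "L_stable gens"
begin

definition GG :: "(complex \<Rightarrow> complex) set" where
  "GG = gen_by (fst ` set gens)"

lemma GG_sub: "germ_subgroup GG" "fst ` set gens \<subseteq> GG" "\<And>g. g \<in> GG \<Longrightarrow> tracked gens g"
  "\<And>H. germ_subgroup H \<Longrightarrow> fst ` set gens \<subseteq> H \<Longrightarrow> GG \<subseteq> H"
  using G_basic[OF reps] gen_by_props[OF tracked_subgroup(1)[OF reps] tracked_subgroup(2)[OF reps]]
  unfolding GG_def by auto

lemma GG_diff0: "g \<in> GG \<Longrightarrow> diff0 g"
  using GG_sub(1) germ_subgroup_diff0 by blast

lemma GG_norm1: "g \<in> GG \<Longrightarrow> norm (deriv g 0) = 1"
  using G_deriv_norm1[OF reps stable] unfolding GG_def by blast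

lemma GG_lin:
  assumes g: "g \<in> GG" and "r > 0"
  obtains V \<phi> where "open V" "0 \<in> V" "V \<subseteq> ball 0 r"
    "\<And>n z. z \<in> V \<Longrightarrow> (g ^^ n) z \<in> pseudo_orbit gens z"
    "\<phi> holomorphic_on V" "\<phi> 0 = 0" "deriv \<phi> 0 = 1"
    "\<And>z. z \<in> V \<Longrightarrow> g z \<in> V \<Longrightarrow> \<phi> (g z) = deriv g 0 * \<phi> z"
proof -
  obtain V where V: "open V" "0 \<in> V" "V \<subseteq> ball 0 r"
    "\<And>n z. z \<in> V \<Longrightarrow> (g ^^ n) z \<in> pseudo_orbit gens z"
    "\<And>n z. z \<in> V \<Longrightarrow> (g ^^ n) z \<in> ball 0 r"
    "\<And>n. (g ^^ n) holomorphic_on V"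
    by (rule stable_iter[OF stable GG_sub(3)[OF g] \<open>r > 0\<close>]) blast
  have bnd: "\<And>n z. z \<in> V \<Longrightarrow> norm ((g ^^ n) z) \<le> r"
    using V(5) by (simp add: less_imp_le)
  obtain \<phi> where phi: "\<phi> holomorphic_on V" "\<phi> 0 = 0" "deriv \<phi> 0 = 1"
    "\<forall>z\<in>V. g z \<in> V \<longrightarrow> \<phi> (g z) = deriv g 0 * \<phi> z"
    by (rule cesaro_lin[OF V(1,2) V(6) bnd diff0_0[OF GG_diff0[OF g]]
          iter_deriv[OF GG_diff0[OF g]] GG_norm1[OF g]]) blast
  show ?thesis by (rule that[OF V(1,2,3) V(4) phi(1,2,3)]) (use phi(4) in auto)
qed

lemma lin_inj:
  assumes "\<phi> holomorphic_on V" "open V" "0 \<in> V" "deriv \<phi> 0 = 1"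
  obtains e where "e > 0" "ball 0 e \<subseteq> V" "inj_on \<phi> (ball 0 e)"
proof -
  have "deriv \<phi> 0 \<noteq> 0" using assms(4) by simp
  from has_complex_derivative_locally_injective[OF assms(1) assms(3) assms(2) this]
  obtain e where "e > 0" "ball 0 e \<subseteq> V" "inj_on \<phi> (ball 0 e)" by blast
  then show ?thesis by (rule that)
qed

lemma GG_linearize:
  assumes g: "g \<in> GG"
  obtains \<phi> e where "e > 0" "\<phi> holomorphic_on ball 0 e" "inj_on \<phi> (ball 0 e)" "\<phi> 0 = 0"
    "\<And>z. z \<in> ball 0 e \<Longrightarrow> \<phi> (g z) = deriv g 0 * \<phi> z"
proof -
  obtain V \<phi> where V: "open V" "0 \<in> V"
    "\<phi> holomorphic_on V" "\<phi> 0 = 0" "deriv \<phi> 0 = 1"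
    "\<And>z. z \<in> V \<Longrightarrow> g z \<in> V \<Longrightarrow> \<phi> (g z) = deriv g 0 * \<phi> z"
    by (rule GG_lin[OF g zero_less_one]) blast
  obtain e where e: "e > 0" "ball 0 e \<subseteq> V" "inj_on \<phi> (ball 0 e)"
    by (rule lin_inj[OF V(3,1,2,5)]) blast
  obtain d where d: "d > 0" "\<And>z. z \<in> ball 0 d \<Longrightarrow> g z \<in> V"
    by (rule cont0_open[OF diff0_cont[OF GG_diff0[OF g]] diff0_0[OF GG_diff0[OF g]] V(1,2)]) blast
  define e' where "e' = min e d"
  have e': "e' > 0" "ball 0 e' \<subseteq> ball 0 e" "ball 0 e' \<subseteq> ball 0 d" using e d unfolding e'_def by auto
  have "\<phi> holomorphic_on ball 0 e'" using V(3) e(2) e'(2) holomorphic_on_subset by blast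
  moreover have "inj_on \<phi> (ball 0 e')" using e(3) e'(2) inj_on_subset by blast
  moreover have "\<phi> (g z) = deriv g 0 * \<phi> z" if "z \<in> ball 0 e'" for z
    using V(6) that e'(2,3) e(2) d(2) by blast
  ultimately show ?thesis using that[OF e'(1)] V(4) by blast
qed

lemma GG_kernel:
  assumes g: "g \<in> GG" and d1: "deriv g 0 = 1"
  shows "germ_eq g id"
proof -
  obtain \<phi> e where e: "e > 0" "inj_on \<phi> (ball 0 e)"
    "\<And>z. z \<in> ball 0 e \<Longrightarrow> \<phi> (g z) = deriv g 0 * \<phi> z"
    by (rule GG_linearize[OF g]) blast
  obtain d where d: "d > 0" "\<And>z. z \<in> ball 0 d \<Longrightarrow> g z \<in> ball 0 e"
    by (rule cont0_ball[OF diff0_cont[OF GG_diff0[OF g]] diff0_0[OF GG_diff0[OF g]] e(1)]) blast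
  show ?thesis
  proof (rule germ_eqI[of "ball 0 (min d e)"])
    fix z :: complex assume z: "z \<in> ball 0 (min d e)"
    then have zz: "z \<in> ball 0 e" "g z \<in> ball 0 e" using d(2) by auto
    have "\<phi> (g z) = \<phi> z" using e(3)[OF zz(1)] d1 by simp
    then show "g z = id z" using inj_onD[OF e(2) _ zz(2) zz(1)] by simp
  qed (use d e in auto)
qed

lemma GG_rho_inj:
  assumes g: "g \<in> GG" and h: "h \<in> GG" and eq: "deriv g 0 = deriv h 0"
  shows "germ_eq g h"
proof -
  obtain k where k: "k \<in> GG" "germ_eq (h \<circ> k) id" "germ_eq (k \<circ> h) id"
    using germ_subgroup_inv[OF GG_sub(1) h] by blast
  have gk: "g \<circ> k \<in> GG" using germ_subgroup_comp[OF GG_sub(1) g k(1)] .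
  have "deriv (g \<circ> k) 0 = deriv (h \<circ> k) 0"
    using deriv_comp0[OF GG_diff0[OF g] GG_diff0[OF k(1)]] deriv_comp0[OF GG_diff0[OF h] GG_diff0[OF k(1)]] eq
    by simp
  also have "\<dots> = 1" using deriv_germ[OF k(2)] deriv_id0 by simp
  finally have "germ_eq (g \<circ> k) id" using GG_kernel[OF gk] by blast
  then have "germ_eq ((g \<circ> k) \<circ> h) (id \<circ> h)"
    using germ_eq_comp_right diff0_cont[OF GG_diff0[OF h]] diff0_0[OF GG_diff0[OF h]] by blast
  moreover have "germ_eq (g \<circ> (k \<circ> h)) (g \<circ> id)" using germ_eq_comp_left[OF k(3)] .
  ultimately have "germ_eq (g \<circ> (k \<circ> h)) h" "germ_eq (g \<circ> (k \<circ> h)) g"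
    by (simp_all add: o_assoc)
  then show ?thesis using germ_eq_sym germ_eq_trans by blast
qed

lemma GG_abelian: "germ_abelian GG"
  unfolding germ_abelian_def
proof (intro ballI)
  fix g h assume g: "g \<in> GG" and h: "h \<in> GG"
  have "deriv (g \<circ> h) 0 = deriv (h \<circ> g) 0"
    using deriv_comp0[OF GG_diff0[OF g] GG_diff0[OF h]] deriv_comp0[OF GG_diff0[OF h] GG_diff0[OF g]]
    by simp
  then show "germ_eq (g \<circ> h) (h \<circ> g)"
    using GG_rho_inj germ_subgroup_comp[OF GG_sub(1)] g h by blast
qed

lemma GG_linearizable: "g \<in> GG \<Longrightarrow> linearizable g"
proof -
  assume g: "g \<in> GG"
  obtain \<phi> e where e: "e > 0" "\<phi> holomorphic_on ball 0 e" "inj_on \<phi> (ball 0 e)" "\<phi> 0 = 0"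
    "\<And>z. z \<in> ball 0 e \<Longrightarrow> \<phi> (g z) = deriv g 0 * \<phi> z"
    by (rule GG_linearize[OF g]) blast
  have "diff0 \<phi>" unfolding diff0_def using e by (intro exI[of _ "ball 0 e"]) auto
  moreover have "\<forall>\<^sub>F z in nhds 0. \<phi> (g z) = deriv g 0 * \<phi> z"
    unfolding eventually_nhds using e by (intro exI[of _ "ball 0 e"]) auto
  ultimately show ?thesis unfolding linearizable_def by blast
qed

end



lemma exp2pi_cis: "exp (2 * pi * \<i> * complex_of_real t) = cis (2 * pi * t)"
  by (simp add: cis_conv_exp mult_ac)

lemma resonant_root:
  assumes "resonant f"
  shows "\<exists>b>0. deriv f 0 ^ b = 1"
proof -
  obtain t where t: "t \<in> \<rat>" "deriv f 0 = cis (2 * pi * t)"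
    using assms unfolding resonant_def exp2pi_cis by blast
  obtain a b where ab: "b > 0" "t = of_int a / of_int b" using Rats_cases'[OF t(1)] by metis
  define nb where "nb = nat b"
  have nb: "nb > 0" "real nb = of_int b" using ab(1) unfolding nb_def by auto
  have "deriv f 0 ^ nb = cis (real nb * (2 * pi * t))" using t(2) Complex.DeMoivre by simp
  also have "real nb * (2 * pi * t) = 2 * pi * of_int a"
    using nb(2) ab by (simp add: field_simps)
  also have "cis (2 * pi * of_int a) = 1" by (rule cis_multiple_2pi) simp
  finally show ?thesis using nb(1) by blast
qed

lemma resonant_common_root:
  assumes "finite F" "\<forall>f\<in>F. resonant f"
  shows "\<exists>N>0. \<forall>f\<in>F. deriv f 0 ^ N = 1"
  using assms
proof (induction F rule: finite_induct)
  case empty then show ?case by (intro exI[of _ 1]) auto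
next
  case (insert f F)
  then obtain N where N: "N > 0" "\<forall>g\<in>F. deriv g 0 ^ N = 1" by auto
  obtain b where b: "b > 0" "deriv f 0 ^ b = 1" using resonant_root insert(4) by blast
  have "\<forall>g\<in>insert f F. deriv g 0 ^ (N * b) = 1"
  proof
    fix g assume "g \<in> insert f F"
    then show "deriv g 0 ^ (N * b) = 1"
    proof
      assume "g = f" then show ?thesis using b(2) by (metis mult.commute power_mult power_one)
    next
      assume "g \<in> F" then show ?thesis using N(2) by (metis power_mult power_one)
    qed
  qed
  then show ?case using N(1) b(1) by (intro exI[of _ "N * b"]) auto
qed

lemma unit_exp:
  assumes "norm (z::complex) = 1"
  shows "\<exists>t. z = exp (2 * pi * \<i> * complex_of_real t)"
proof -
  have "z \<noteq> 0" using assms by auto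
  then have "cis (Arg z) = z" using cis_Arg[of z] assms by (simp add: sgn_eq)
  moreover have "cis (Arg z) = exp (2 * pi * \<i> * complex_of_real (Arg z / (2 * pi)))"
    unfolding exp2pi_cis by simp
  ultimately show ?thesis by metis
qed

context LS
begin

lemma GG_dichotomy: "g \<in> GG \<Longrightarrow> resonant g \<or> real_nonresonant g"
  using unit_exp[OF GG_norm1] unfolding resonant_def real_nonresonant_def by blast

lemma class_eq: "germ_eq h h' \<Longrightarrow> {x. germ_eq x h} = {x. germ_eq x h'}"
  using germ_eq_sym germ_eq_trans by blast

lemma roots_finite: "N > 0 \<Longrightarrow> finite {z::complex. z ^ N = 1}"
  using card_roots_unity_eq[of N] card_ge_0_finite by fastforce

lemma GG_sub_finite:
  assumes S: "S \<subseteq> GG" and N: "N > 0" and r: "\<forall>h\<in>S. deriv h 0 ^ N = 1"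
  shows "germ_finite S"
proof -
  define pick where "pick w = (SOME h. h \<in> S \<and> deriv h 0 = w)" for w
  define cls where "cls h = {x. germ_eq x h}" for h
  have "cls h = cls (pick (deriv h 0))" if h: "h \<in> S" for h
  proof -
    have "pick (deriv h 0) \<in> S \<and> deriv (pick (deriv h 0)) 0 = deriv h 0"
      unfolding pick_def by (rule someI[of _ h]) (use h in blast)
    then have "germ_eq h (pick (deriv h 0))"
      by (intro GG_rho_inj) (use S h in auto)
    then show ?thesis unfolding cls_def by (rule class_eq)
  qed
  then have "cls ` S \<subseteq> (\<lambda>w. cls (pick w)) ` {z. z ^ N = 1}" using r by auto
  moreover have "finite ((\<lambda>w. cls (pick w)) ` {z::complex. z ^ N = 1})"
    using roots_finite[OF N] by blast
  ultimately have "finite (cls ` S)" using finite_subset by blast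
  then show ?thesis unfolding germ_finite_def cls_def .
qed

lemma subgroup_iter: "germ_subgroup S \<Longrightarrow> k \<in> S \<Longrightarrow> k ^^ n \<in> S"
  by (induction n) (auto intro: germ_subgroup_id germ_subgroup_comp)

lemma GG_sub_cyclic:
  assumes SG: "germ_subgroup S" and S: "S \<subseteq> GG" and N: "N > 0" and r: "\<forall>h\<in>S. deriv h 0 ^ N = 1"
  shows "\<exists>g\<in>S. \<forall>h\<in>S. \<exists>n::nat. germ_eq h (g ^^ n)"
proof -
  define \<omega> where "\<omega> = cis (2 * pi / real N)"
  have \<omega>N: "\<omega> ^ N = 1" unfolding \<omega>_def Complex.DeMoivre using N by simp
  have rep: "\<exists>m. deriv h 0 = \<omega> ^ m" if "h \<in> S" for h
  proof -
    have "deriv h 0 \<in> {z. z ^ N = 1}" using r that by auto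
    then obtain m where "deriv h 0 = cis (2 * pi * real m / real N)"
      using Complex.bij_betw_roots_unity[OF N] unfolding bij_betw_def by auto
    moreover have "cis (2 * pi * real m / real N) = \<omega> ^ m" unfolding \<omega>_def Complex.DeMoivre by (simp add: mult.commute)
    ultimately show ?thesis by auto
  qed
  define P where "P = {k::nat. 0 < k \<and> (\<exists>h\<in>S. deriv h 0 = \<omega> ^ k)}"
  have "N \<in> P" unfolding P_def using N \<omega>N germ_subgroup_id[OF SG] deriv_id0 by (intro CollectI conjI bexI[of _ id]) auto
  define d where "d = (LEAST k. k \<in> P)"
  have dP: "d \<in> P" unfolding d_def using LeastI[of "\<lambda>k. k \<in> P", OF \<open>N \<in> P\<close>] .
  then obtain g0 where g0: "g0 \<in> S" "deriv g0 0 = \<omega> ^ d" "d > 0" unfolding P_def by blast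
  obtain k0 where k0: "k0 \<in> S" "germ_eq (g0 \<circ> k0) id" using germ_subgroup_inv[OF SG g0(1)] by blast
  have dg: "diff0 g0" "diff0 k0" using g0(1) k0(1) S GG_diff0 by auto
  have inv: "\<omega> ^ d * deriv k0 0 = 1"
    using deriv_comp0[OF dg] deriv_germ[OF k0(2)] deriv_id0 g0(2) by simp
  have "\<forall>h\<in>S. \<exists>n::nat. germ_eq h (g0 ^^ n)"
  proof
    fix h assume h: "h \<in> S"
    obtain m where m: "deriv h 0 = \<omega> ^ m" using rep[OF h] by blast
    define q where "q = m div d"
    define rr where "rr = m mod d"
    have mqr: "m = q * d + rr" unfolding q_def rr_def by simp
    have el: "h \<circ> (k0 ^^ q) \<in> S"
      using germ_subgroup_comp[OF SG h subgroup_iter[OF SG k0(1)]] .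
    have dkq: "deriv (k0 ^^ q) 0 = deriv k0 0 ^ q"
      using iter_deriv[OF dg(2)] by (rule DERIV_imp_deriv)
    have diffkq: "diff0 (k0 ^^ q)" using subgroup_iter[OF SG k0(1)] S GG_diff0 by blast
    have "deriv (h \<circ> (k0 ^^ q)) 0 = \<omega> ^ m * deriv k0 0 ^ q"
      using deriv_comp0[OF GG_diff0 diffkq] h S m dkq by auto
    also have "\<dots> = \<omega> ^ rr * (\<omega> ^ d * deriv k0 0) ^ q"
      unfolding mqr by (simp add: power_add power_mult_distrib power_mult mult_ac)
    also have "\<dots> = \<omega> ^ rr" using inv by simp
    finally have elr: "deriv (h \<circ> (k0 ^^ q)) 0 = \<omega> ^ rr" .
    have "rr = 0"
    proof (rule ccontr)
      assume "rr \<noteq> 0"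
      then have "rr \<in> P" unfolding P_def using el elr by auto
      then have "d \<le> rr" unfolding d_def by (rule Least_le)
      moreover have "rr < d" unfolding rr_def using g0(3) by simp
      ultimately show False by simp
    qed
    then have "deriv h 0 = (\<omega> ^ d) ^ q" using m mqr by (simp add: power_mult mult.commute)
    moreover have "deriv (g0 ^^ q) 0 = (\<omega> ^ d) ^ q"
      using iter_deriv[OF dg(1)] g0(2) DERIV_imp_deriv by metis
    ultimately have "germ_eq h (g0 ^^ q)"
      by (intro GG_rho_inj) (use h S subgroup_iter[OF SG g0(1), of q] in auto)
    then show "\<exists>n::nat. germ_eq h (g0 ^^ n)" by blast
  qed
  then show ?thesis using g0(1) by blast
qed

lemma root_subgroup:
  assumes N: "N > 0"
  shows "germ_subgroup {g\<in>GG. deriv g 0 ^ N = 1}"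
  unfolding germ_subgroup_def
proof (intro conjI ballI allI impI)
  fix g assume "g \<in> {g\<in>GG. deriv g 0 ^ N = 1}" then show "diff0 g" using GG_diff0 by blast
next
  fix g g' assume g: "g \<in> {g\<in>GG. deriv g 0 ^ N = 1}" and "germ_eq g' g"
  then show "g' \<in> {g\<in>GG. deriv g 0 ^ N = 1}"
    using germ_subgroup_sat[OF GG_sub(1)] deriv_germ by auto
next
  show "id \<in> {g\<in>GG. deriv g 0 ^ N = 1}" using germ_subgroup_id[OF GG_sub(1)] deriv_id0 by simp
next
  fix g h assume g: "g \<in> {g\<in>GG. deriv g 0 ^ N = 1}" and h: "h \<in> {g\<in>GG. deriv g 0 ^ N = 1}"
  then show "g \<circ> h \<in> {g\<in>GG. deriv g 0 ^ N = 1}"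
    using germ_subgroup_comp[OF GG_sub(1)] deriv_comp0 GG_diff0 by (auto simp: power_mult_distrib)
next
  fix g assume g: "g \<in> {g\<in>GG. deriv g 0 ^ N = 1}"
  obtain k where k: "k \<in> GG" "germ_eq (g \<circ> k) id" "germ_eq (k \<circ> g) id"
    using germ_subgroup_inv[OF GG_sub(1)] g by blast
  have "deriv g 0 * deriv k 0 = 1"
    using deriv_comp0[OF GG_diff0 GG_diff0] deriv_germ[OF k(2)] deriv_id0 g k(1) by auto
  then have "(deriv g 0 * deriv k 0) ^ N = 1" by simp
  then have "deriv k 0 ^ N = 1" using g by (simp add: power_mult_distrib)
  then show "\<exists>k\<in>{g\<in>GG. deriv g 0 ^ N = 1}. germ_eq (g \<circ> k) id \<and> germ_eq (k \<circ> g) id"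
    using k by blast
qed

end



lemma countable_orbit:
  "countable (pseudo_orbit gens p)"
proof -
  define step where "step A = A \<union> (\<Union>x\<in>set gens. fst x ` (A \<inter> snd x))
      \<union> (\<Union>x\<in>set gens. inv_into (snd x) (fst x) ` (A \<inter> fst x ` snd x))" for A
  have cs: "countable (step A)" if "countable A" for A
    unfolding step_def using that by (intro countable_Un countable_UN countable_image) (auto simp: countable_finite)
  have cn: "countable ((step ^^ n) {p})" for n
    by (induction n) (auto intro: cs)
  have stepI1: "f w \<in> step A" if "(f, U) \<in> set gens" "w \<in> A" "w \<in> U" for f U w A
    unfolding step_def using that by force
  have stepI2: "inv_into U f w \<in> step A" if "(f, U) \<in> set gens" "w \<in> A" "w \<in> f ` U" for f U w A
    unfolding step_def using that by force
  have "\<exists>n. x \<in> (step ^^ n) {p}" if "x \<in> pseudo_orbit gens p" for x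
    using that
  proof (induction rule: pseudo_orbit.induct)
    case base then show ?case by (intro exI[of _ 0]) simp
  next
    case (fwd w f U)
    then obtain n where n: "w \<in> (step ^^ n) {p}" by blast
    have "f w \<in> step ((step ^^ n) {p})" by (rule stepI1[OF fwd(2) n fwd(3)])
    then show ?case by (intro exI[of _ "Suc n"]) simp
  next
    case (bwd w f U)
    then obtain n where n: "w \<in> (step ^^ n) {p}" by blast
    have "inv_into U f w \<in> step ((step ^^ n) {p})" by (rule stepI2[OF bwd(2) n bwd(3)])
    then show ?case by (intro exI[of _ "Suc n"]) simp
  qed
  then have "pseudo_orbit gens p \<subseteq> (\<Union>n. (step ^^ n) {p})" by blast
  moreover have "countable (\<Union>n. (step ^^ n) {p})" using cn by (intro countable_UN) auto
  ultimately show ?thesis using countable_subset by blast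
qed

lemma cis_frac: "cis (2 * pi * x) = cis (2 * pi * frac x)"
proof -
  have "2 * pi * x = 2 * pi * frac x + 2 * pi * of_int \<lfloor>x\<rfloor>" unfolding frac_def by (simp add: algebra_simps)
  then have "cis (2 * pi * x) = cis (2 * pi * frac x) * cis (2 * pi * of_int \<lfloor>x\<rfloor>)"
    unfolding cis_mult by (rule arg_cong)
  also have "cis (2 * pi * of_int \<lfloor>x\<rfloor>) = 1" by (rule cis_multiple_2pi) simp
  finally show ?thesis by simp
qed

lemma cis_eq_1: "cis x = 1 \<Longrightarrow> \<exists>n::int. x = 2 * pi * of_int n"
proof -
  assume "cis x = 1"
  then have "exp (\<i> * complex_of_real x) = 1" by (simp add: cis_conv_exp)
  then obtain n :: int where "Im (\<i> * complex_of_real x) = of_int (2 * n) * pi" using exp_eq_1 by blast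
  then show ?thesis by (intro exI[of _ n]) simp
qed

lemma irr_pow_ne1:
  assumes "t \<notin> \<rat>" "n > 0"
  shows "cis (2 * pi * t) ^ n \<noteq> 1"
proof
  assume "cis (2 * pi * t) ^ n = 1"
  then have "cis (real n * (2 * pi * t)) = 1" by (simp add: Complex.DeMoivre)
  then obtain m :: int where "real n * (2 * pi * t) = 2 * pi * of_int m" using cis_eq_1 by blast
  then have "t = of_int m / real n" using assms(2) by (simp add: field_simps)
  then have "t \<in> \<rat>" by simp
  then show False using assms(1) by simp
qed

lemma cis_dense:
  assumes t: "t \<notin> \<rat>" and u: "norm u = 1" and e: "e > 0"
  shows "\<exists>n>0. norm (cis (2 * pi * t) ^ n - u) < e"
proof -
  define c where "c x = cis (2 * pi * x)" for x
  have "u \<noteq> 0" using u by auto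
  then have "cis (Arg u) = u" using cis_Arg[of u] u by (simp add: sgn_eq)
  define \<alpha> where "\<alpha> = frac (Arg u / (2 * pi))"
  have "c \<alpha> = u" unfolding c_def \<alpha>_def using cis_frac[of "Arg u / (2 * pi)"] \<open>cis (Arg u) = u\<close> by simp
  have "isCont c \<alpha>" unfolding c_def cis_conv_exp by (intro continuous_intros)
  then have "\<forall>e>0. \<exists>d>0. c ` ball \<alpha> d \<subseteq> ball (c \<alpha>) e" unfolding continuous_at_ball .
  then obtain d where d: "d > 0" "c ` ball \<alpha> d \<subseteq> ball u e" using e \<open>c \<alpha> = u\<close> by metis
  have a01: "0 \<le> \<alpha>" "\<alpha> \<le> 1" unfolding \<alpha>_def using frac_ge_0 frac_lt_1 less_imp_le by auto
  obtain k where k: "k > 0" "\<bar>frac (real k * t) - \<alpha>\<bar> < d"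
    using Kronecker_approx_1_explicit[OF t a01 d(1)] by blast
  have "frac (real k * t) \<in> ball \<alpha> d" using k(2) by (simp add: dist_real_def abs_minus_commute)
  then have "c (frac (real k * t)) \<in> ball u e" using d(2) by blast
  moreover have "c (frac (real k * t)) = cis (2 * pi * t) ^ k"
    unfolding c_def Complex.DeMoivre using cis_frac[of "real k * t"] by (simp add: mult_ac)
  ultimately have "norm (cis (2 * pi * t) ^ k - u) < e" by (simp add: dist_norm norm_minus_commute)
  then show ?thesis using k(1) by blast
qed



context LS
begin

lemma irr_orbits:
  assumes f: "f \<in> GG" and t: "t \<notin> \<rat>" and lam: "deriv f 0 = cis (2 * pi * t)"
  shows "\<exists>W. open W \<and> 0 \<in> W \<and> (\<forall>p\<in>W - {0}. recurrent_orbit gens p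
           \<and> \<not> closed_off_origin (pseudo_orbit gens p) \<and> \<not> closed (pseudo_orbit gens p))"
proof -
  define lm where "lm = deriv f 0"
  obtain V1 \<phi> where V1: "open V1" "0 \<in> V1"
    "\<phi> holomorphic_on V1" "\<phi> 0 = 0" "deriv \<phi> 0 = 1"
    "\<And>z. z \<in> V1 \<Longrightarrow> f z \<in> V1 \<Longrightarrow> \<phi> (f z) = deriv f 0 * \<phi> z"
    by (rule GG_lin[OF f zero_less_one]) auto
  obtain e1 where e1: "e1 > 0" "ball 0 e1 \<subseteq> V1" "inj_on \<phi> (ball 0 e1)"
    by (rule lin_inj[OF V1(3,1,2,5)]) auto
  obtain \<delta> where \<delta>: "\<delta> > 0" "\<forall>z\<in>ball 0 \<delta>. f z \<in> pseudo_orbit gens z"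
    using GG_sub(3)[OF f] unfolding tracked_def by blast
  define c where "c = min (e1 / 2) \<delta>"
  have c: "c > 0" "cball 0 c \<subseteq> ball 0 e1" "ball 0 c \<subseteq> ball 0 \<delta>"
    using e1(1) \<delta>(1) unfolding c_def by auto
  define K where "K = cball (0::complex) c"
  have K: "compact K" "K \<subseteq> V1" "inj_on \<phi> K" "ball 0 c \<subseteq> K"
    unfolding K_def using c e1 inj_on_subset by auto
  have contK: "continuous_on K \<phi>"
    using V1(3) K(2) holomorphic_on_imp_continuous_on holomorphic_on_subset by blast
  define \<psi> where "\<psi> = the_inv_into K \<phi>"
  have \<psi>cont: "continuous_on (\<phi> ` K) \<psi>" unfolding \<psi>_def by (rule continuous_on_inv_into[OF contK K(1,3)])
  have \<psi>\<phi>: "\<And>x. x \<in> K \<Longrightarrow> \<psi> (\<phi> x) = x" unfolding \<psi>_def using the_inv_into_f_f[OF K(3)] by blast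
  have \<phi>\<psi>: "\<And>w. w \<in> \<phi> ` K \<Longrightarrow> \<phi> (\<psi> w) = w" unfolding \<psi>_def using f_the_inv_into_f[OF K(3)] by blast
  have \<psi>K: "\<And>w. w \<in> \<phi> ` K \<Longrightarrow> \<psi> w \<in> K" unfolding \<psi>_def using the_inv_into_into[OF K(3)] by blast
  have closedK: "closed (\<phi> ` K)" using compact_continuous_image[OF contK K(1)] compact_imp_closed by blast
  have \<phi>0K: "0 \<in> K" unfolding K_def using c by simp
  have "open (ball (0::complex) c) \<and> 0 \<in> ball (0::complex) c" using c by simp
  then obtain W where W: "open W" "0 \<in> W" "W \<subseteq> ball 0 c" "\<forall>p\<in>W. pseudo_orbit gens p \<subseteq> ball 0 c"
    using stable unfolding L_stable_def by blast
  have "\<forall>p\<in>W - {0}. recurrent_orbit gens p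
           \<and> \<not> closed_off_origin (pseudo_orbit gens p) \<and> \<not> closed (pseudo_orbit gens p)"
  proof
    fix p assume p: "p \<in> W - {0}"
    let ?O = "pseudo_orbit gens p"
    have orb: "(f ^^ n) p \<in> ?O" for n
    proof (induction n)
      case 0 then show ?case by (simp add: pseudo_orbit.base)
    next
      case (Suc n)
      have "(f ^^ n) p \<in> ball 0 \<delta>" using Suc W(4) p c(3) by blast
      then have "f ((f ^^ n) p) \<in> pseudo_orbit gens ((f ^^ n) p)" using \<delta>(2) by blast
      then show ?case using orb_trans[OF Suc] by simp
    qed
    have inK: "(f ^^ n) p \<in> K" for n using orb[of n] W(4) p K(4) by blast
    have phin: "\<phi> ((f ^^ n) p) = lm ^ n * \<phi> p" for n
    proof (induction n)
      case 0 then show ?case by simp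
    next
      case (Suc n)
      have "(f ^^ n) p \<in> V1" "f ((f ^^ n) p) \<in> V1" using inK[of n] inK[of "Suc n"] K(2) by auto
      then have "\<phi> (f ((f ^^ n) p)) = lm * \<phi> ((f ^^ n) p)" using V1(6) unfolding lm_def by blast
      then show ?case using Suc by simp
    qed
    have pK: "p \<in> K" using p W(3) K(4) by blast
    have \<phi>p: "\<phi> p \<noteq> 0"
    proof
      assume "\<phi> p = 0"
      then have "\<phi> p = \<phi> 0" using V1(4) by simp
      then have "p = 0" using inj_onD[OF K(3) _ pK \<phi>0K] by simp
      then show False using p by simp
    qed
    have lam1: "norm lm = 1" unfolding lm_def using GG_norm1[OF f] .
    have lamn: "lm ^ n \<noteq> 1" if "n > 0" for n unfolding lm_def lam using irr_pow_ne1[OF t that] .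
    have \<phi>nK: "lm ^ n * \<phi> p \<in> \<phi> ` K" for n
    proof (rule image_eqI)
      show "lm ^ n * \<phi> p = \<phi> ((f ^^ n) p)" using phin[of n] by simp
      show "(f ^^ n) p \<in> K" by (rule inK)
    qed
    have \<psi>n: "\<psi> (lm ^ n * \<phi> p) = (f ^^ n) p" for n using phin[of n] \<psi>\<phi>[OF inK[of n]] by simp
    have rec: "p islimpt ?O"
      unfolding islimpt_approachable
    proof (intro allI impI)
      fix \<epsilon> :: real assume "\<epsilon> > 0"
      have "\<phi> p \<in> \<phi> ` K" using pK by blast
      then obtain d where d: "d > 0" "\<forall>w\<in>\<phi> ` K. dist w (\<phi> p) < d \<longrightarrow> dist (\<psi> w) (\<psi> (\<phi> p)) < \<epsilon>"
        using \<psi>cont \<open>\<epsilon> > 0\<close> unfolding continuous_on_iff by blast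
      have "d / norm (\<phi> p) > 0" using d(1) \<phi>p by simp
      then obtain n where n: "n > 0" "norm (cis (2 * pi * t) ^ n - 1) < d / norm (\<phi> p)"
        using cis_dense[OF t, of 1] by auto
      have "dist (lm ^ n * \<phi> p) (\<phi> p) = norm (lm ^ n - 1) * norm (\<phi> p)"
        by (simp add: dist_norm norm_mult[symmetric] left_diff_distrib)
      also have "\<dots> < d" using n(2) \<phi>p unfolding lm_def lam by (simp add: pos_less_divide_eq)
      finally have "dist (\<psi> (lm ^ n * \<phi> p)) (\<psi> (\<phi> p)) < \<epsilon>" using d(2) \<phi>nK by blast
      then have "dist ((f ^^ n) p) p < \<epsilon>" using \<psi>n \<psi>\<phi>[OF pK] by simp
      moreover have "(f ^^ n) p \<noteq> p"
      proof
        assume "(f ^^ n) p = p"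
        then have "lm ^ n * \<phi> p = 1 * \<phi> p" using phin[of n] by simp
        then have "lm ^ n = 1" using \<phi>p mult_cancel_right by blast
        then show False using lamn n(1) by blast
      qed
      ultimately show "\<exists>x'\<in>?O. x' \<noteq> p \<and> dist x' p < \<epsilon>" using orb by blast
    qed
    define A where "A = range (\<lambda>n. lm ^ n * \<phi> p)"
    define C where "C = sphere (0::complex) (norm (\<phi> p))"
    have AK: "A \<subseteq> \<phi> ` K" unfolding A_def using \<phi>nK by blast
    have CA: "C \<subseteq> closure A"
    proof
      fix w assume w: "w \<in> C"
      then have nw: "norm w = norm (\<phi> p)" unfolding C_def by simp
      show "w \<in> closure A"
        unfolding closure_approachable
      proof (intro allI impI)
        fix \<epsilon> :: real assume "\<epsilon> > 0"
        have u: "norm (w / \<phi> p) = 1" using nw \<phi>p by (simp add: norm_divide)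
        have "\<epsilon> / norm (\<phi> p) > 0" using \<open>\<epsilon> > 0\<close> \<phi>p by simp
        then obtain n where n: "n > 0" "norm (cis (2 * pi * t) ^ n - w / \<phi> p) < \<epsilon> / norm (\<phi> p)"
          using cis_dense[OF t u] by blast
        have "dist (lm ^ n * \<phi> p) w = norm (lm ^ n - w / \<phi> p) * norm (\<phi> p)"
          using \<phi>p by (simp add: dist_norm norm_mult[symmetric] left_diff_distrib)
        also have "\<dots> < \<epsilon>" using n(2) \<phi>p unfolding lm_def lam by (simp add: pos_less_divide_eq)
        finally show "\<exists>y\<in>A. dist y w < \<epsilon>" unfolding A_def by blast
      qed
    qed
    have clA: "closure A \<subseteq> \<phi> ` K" using closure_minimal[OF AK closedK] .
    have "\<psi> ` closure A \<subseteq> closure ?O"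
    proof (rule image_closure_subset)
      show "continuous_on (closure A) \<psi>" using continuous_on_subset[OF \<psi>cont clA] .
      show "closed (closure ?O)" by simp
      have "\<psi> ` A \<subseteq> ?O" unfolding A_def using \<psi>n orb by auto
      then show "\<psi> ` A \<subseteq> closure ?O" using closure_subset by blast
    qed
    then have \<psi>C: "\<psi> ` C \<subseteq> closure ?O" using CA by blast
    have CK: "C \<subseteq> \<phi> ` K" using CA clA by blast
    have "uncountable C"
    proof (rule connected_uncountable)
      show "connected C" unfolding C_def by (rule connected_sphere) simp
      show "\<phi> p \<in> C" "- \<phi> p \<in> C" unfolding C_def by auto
      show "\<phi> p \<noteq> - \<phi> p" using \<phi>p by simp
    qed
    moreover have "inj_on \<psi> C"
      using inj_on_subset[OF inj_on_the_inv_into[OF K(3)] CK] unfolding \<psi>_def .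
    ultimately have "uncountable (\<psi> ` C)" using countable_image_inj_on by auto
    moreover have "countable ?O" by (rule countable_orbit)
    ultimately have "\<not> (\<psi> ` C \<subseteq> ?O)" using countable_subset by auto
    then obtain q where q: "q \<in> \<psi> ` C" "q \<notin> ?O" by auto
    then obtain w where w: "w \<in> C" "q = \<psi> w" by blast
    have "\<phi> q = w" using w \<phi>\<psi> CK by blast
    moreover have "w \<noteq> 0" using w(1) \<phi>p unfolding C_def by auto
    ultimately have "q \<noteq> 0" using V1(4) by auto
    have qcl: "q \<in> closure ?O" using q(1) \<psi>C by blast
    have "\<not> closed_off_origin ?O" unfolding closed_off_origin_def using qcl q(2) \<open>q \<noteq> 0\<close> by blast
    moreover have "\<not> closed ?O"
    proof
      assume "closed ?O"
      then have "closure ?O = ?O" by (rule closure_closed)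
      then show False using qcl q(2) by simp
    qed
    ultimately show "recurrent_orbit gens p \<and> \<not> closed_off_origin ?O \<and> \<not> closed ?O"
      unfolding recurrent_orbit_def using rec by blast
  qed
  then show ?thesis using W(1,2) by blast
qed

end



theorem lemma2p1:
  fixes gens :: "((complex \<Rightarrow> complex) \<times> complex set) list"
    and G :: "(complex \<Rightarrow> complex) set"
  assumes reps: "good_reps gens"
    and G_def: "G = gen_by (fst ` set gens)"
    and stable: "L_stable gens"
  shows "(finite_cyclic G \<or> circle_type G)
    \<and> (\<forall>F. finite F \<and> F \<subseteq> G \<and> (\<forall>h\<in>gen_by F. resonant h) \<longrightarrow> germ_finite (gen_by F))
    \<and> (\<exists>W. open W \<and> 0 \<in> W \<and>
         (\<forall>p\<in>W - {0}.
            ((closed_off_origin (pseudo_orbit gens p) \<or> closed (pseudo_orbit gens p)) \<longrightarrow> germ_finite G)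
          \<and> (\<not> recurrent_orbit gens p \<longrightarrow> germ_finite G)))"
proof -
  interpret LS gens using reps stable by unfold_locales
  have GG: "G = GG" unfolding G_def GG_def ..
  have part2: "\<forall>F. finite F \<and> F \<subseteq> G \<and> (\<forall>h\<in>gen_by F. resonant h) \<longrightarrow> germ_finite (gen_by F)"
  proof (intro allI impI)
    fix F assume F: "finite F \<and> F \<subseteq> G \<and> (\<forall>h\<in>gen_by F. resonant h)"
    have FG: "F \<subseteq> GG" using F GG by simp
    note gp = gen_by_props[OF GG_sub(1) FG]
    have "\<forall>f\<in>F. resonant f" using F gp(2) by blast
    then obtain N where N: "N > 0" "\<forall>f\<in>F. deriv f 0 ^ N = 1"
      using resonant_common_root F by blast
    have "F \<subseteq> {g\<in>GG. deriv g 0 ^ N = 1}" using FG N(2) by blast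
    then have sub: "gen_by F \<subseteq> {g\<in>GG. deriv g 0 ^ N = 1}" using gp(3)[OF root_subgroup[OF N(1)]] by blast
    show "germ_finite (gen_by F)"
      by (rule GG_sub_finite[OF _ N(1)]) (use sub in auto)
  qed
  show ?thesis
  proof (cases "\<exists>f\<in>fst ` set gens. real_nonresonant f")
    case True
    then obtain f where f: "f \<in> fst ` set gens" "real_nonresonant f" by blast
    have fG: "f \<in> GG" using f(1) GG_sub(2) by blast
    have "circle_type GG" unfolding circle_type_def using GG_abelian fG f(2) GG_linearizable by blast
    moreover obtain t where t: "t \<notin> \<rat>" "deriv f 0 = cis (2 * pi * t)"
      using f(2) unfolding real_nonresonant_def exp2pi_cis by blast
    obtain W where W: "open W" "0 \<in> W" "\<forall>p\<in>W - {0}. recurrent_orbit gens p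
           \<and> \<not> closed_off_origin (pseudo_orbit gens p) \<and> \<not> closed (pseudo_orbit gens p)"
      using irr_orbits[OF fG t] by blast
    have "\<exists>W. open W \<and> 0 \<in> W \<and>
         (\<forall>p\<in>W - {0}.
            ((closed_off_origin (pseudo_orbit gens p) \<or> closed (pseudo_orbit gens p)) \<longrightarrow> germ_finite G)
          \<and> (\<not> recurrent_orbit gens p \<longrightarrow> germ_finite G))"
      using W by blast
    ultimately show ?thesis using part2 GG by blast
  next
    case False
    then have "\<forall>f\<in>fst ` set gens. resonant f" using GG_dichotomy GG_sub(2) by blast
    then obtain N where N: "N > 0" "\<forall>f\<in>fst ` set gens. deriv f 0 ^ N = 1"
      using resonant_common_root[of "fst ` set gens"] by auto
    have "fst ` set gens \<subseteq> {g\<in>GG. deriv g 0 ^ N = 1}" using GG_sub(2) N(2) by blast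
    then have sub: "GG \<subseteq> {g\<in>GG. deriv g 0 ^ N = 1}" using GG_sub(4)[OF root_subgroup[OF N(1)]] by blast
    then have r: "\<forall>h\<in>GG. deriv h 0 ^ N = 1" by blast
    have fin: "germ_finite GG" by (rule GG_sub_finite[OF _ N(1) r]) simp
    have "finite_cyclic GG" unfolding finite_cyclic_def
      using fin GG_sub_cyclic[OF GG_sub(1) _ N(1) r] by blast
    moreover have "\<exists>W. open W \<and> 0 \<in> W \<and>
         (\<forall>p\<in>W - {0}.
            ((closed_off_origin (pseudo_orbit gens p) \<or> closed (pseudo_orbit gens p)) \<longrightarrow> germ_finite G)
          \<and> (\<not> recurrent_orbit gens p \<longrightarrow> germ_finite G))"
      using fin GG by (intro exI[of _ UNIV]) auto
    ultimately show ?thesis using part2 GG by blast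
  qed
qed



end
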